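(* Let $T_s>0$, $t_k=kT_s$ ($k=0,1,2,\dots$), $a\ge 0$, $\eta>0$, and let $b[k]\ge 0$ be a sequence. Let $V:[0,\infty)\to[0,\infty)$ be continuous, differentiable on each interval $(t_k,t_{k+1})$, and satisfy the functional-differential inequality $$\dot V(t)\le -2\eta V(t)+\sqrt{V(t)}\left(a\sup_{t_k\le t'\le t}\sqrt{V(t')}+b[k]\right),\qquad t_k\le t<t_{k+1},\ k=0,1,\dots$$ Let $0<\eta'<\eta$ and suppose $q<1$, where $$q=\max\left\{e^{-\eta' T_s}+\frac{a(1-e^{-\eta' T_s})}{2\eta'},\ \frac{a}{2(\eta-\eta')}\right\},\qquad r=\max\left\{\frac{1-e^{-\eta' T_s}}{2\eta'},\ \frac{1}{2(\eta-\eta')}\right\}.$$ Set $W(t)=\sqrt{V(t)}$, $W[k]=W(t_k)$, $W_0=W[0]$. Then: 1. $W[k+1]\le qW[k]+r\,b[k]$ for all $k\ge 0$; 2. $W[k]\le q^kW_0+r\sum_{i=0}^{k-1}b[i]\,q^{k-i-1}$ for all $k\ge 0$; 3. if $q<\rho<1$ and $b[k]=\frac{\rho-q}{r}W[k]$ for all $k$, then $W[k]$ decays exponentially: $W[k]\le\rho^kW_0$ for all $k\ge 0$. *)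

theory Defs
  imports Complex_Main
begin

definition q_const :: "real \<Rightarrow> real \<Rightarrow> real \<Rightarrow> real \<Rightarrow> real" where
  "q_const Ts a \<eta> \<eta>' = max (exp (- \<eta>' * Ts) + a * (1 - exp (- \<eta>' * Ts)) / (2 * \<eta>'))
                            (a / (2 * (\<eta> - \<eta>')))"

definition r_const :: "real \<Rightarrow> real \<Rightarrow> real \<Rightarrow> real" where
  "r_const Ts \<eta> \<eta>' = max ((1 - exp (- \<eta>' * Ts)) / (2 * \<eta>')) (1 / (2 * (\<eta> - \<eta>')))"

end

theory Submission
  imports Defs "HOL-Analysis.Analysis"
begin

lemma comp_eps:
  fixes V :: "real \<Rightarrow> real"
  assumes T: "t0 < t2" and lam: "l > 0" and C: "C \<ge> 0" and W0: "W0 \<ge> 0" and eps: "\<epsilon> > 0"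
    and cont: "continuous_on {t0..t2} V"
    and nn: "\<And>t. t \<in> {t0..t2} \<Longrightarrow> V t \<ge> 0"
    and init: "sqrt (V t0) \<le> W0"
    and der: "\<And>t. t0 < t \<Longrightarrow> t < t2 \<Longrightarrow> \<exists>D. (V has_real_derivative D) (at t) \<and> D \<le> -2*l*V t + 2*l*C* sqrt (V t)"
    and t: "t \<in> {t0..t2}"
  shows "sqrt (V t) \<le> exp(-l*(t-t0))*W0 + (1-exp(-l*(t-t0)))*C + \<epsilon>"
proof -
  define G where "G t = exp(-l*(t-t0))*W0 + (1-exp(-l*(t-t0)))*C + \<epsilon>" for t
  define \<phi> where "\<phi> t = V t - (G t)^2" for t
  have Gpos: "G t \<ge> \<epsilon>" if "t \<ge> t0" for t
  proof -
    have "exp(-l*(t-t0)) \<le> 1" using that lam by (simp add: mult_nonneg_nonneg)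
    then show ?thesis unfolding G_def using W0 C by (simp add: mult_nonneg_nonneg)
  qed
  have contG: "continuous_on S G" for S unfolding G_def by (intro continuous_intros)
  have contphi: "continuous_on {t0..t2} \<phi>" unfolding \<phi>_def
    by (intro continuous_intros cont contG)
  have V0: "V t0 \<le> W0^2"
  proof -
    have "V t0 = (sqrt (V t0))^2" using nn T by simp
    also have "\<dots> \<le> W0^2" using init nn T by (intro power_mono) auto
    finally show ?thesis .
  qed
  have phi0: "\<phi> t0 < 0"
  proof -
    have "G t0 = W0 + \<epsilon>" unfolding G_def by simp
    moreover have "W0^2 < (W0 + \<epsilon>)^2" using W0 eps by (intro power_strict_mono) auto
    ultimately show ?thesis unfolding \<phi>_def using V0 by simp
  qed
  have key: "\<phi> t1 \<le> 0" if t1: "t0 < t1" "t1 < t2" for t1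
  proof (rule ccontr)
    assume "\<not> \<phi> t1 \<le> 0"
    hence pt1: "\<phi> t1 > 0" by simp
    define Z where "Z = {t0..t1} \<inter> \<phi> -` {0..}"
    have contphi1: "continuous_on {t0..t1} \<phi>" by (rule continuous_on_subset[OF contphi]) (use t1 in auto)
    have "closed Z" unfolding Z_def by (rule continuous_closed_preimage[OF contphi1]) auto
    moreover have "bounded Z" unfolding Z_def by (rule bounded_subset[of "{t0..t1}"]) auto
    ultimately have cZ: "compact Z" using compact_eq_bounded_closed by blast
    have "t1 \<in> Z" unfolding Z_def using pt1 t1 by auto
    hence "Z \<noteq> {}" by auto
    from compact_attains_inf[OF cZ this] obtain s0 where s0Z: "s0 \<in> Z" and s0min: "\<And>y. y \<in> Z \<Longrightarrow> s0 \<le> y"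
      by blast
    have s0: "t0 \<le> s0" "s0 \<le> t1" "\<phi> s0 \<ge> 0" using s0Z unfolding Z_def by auto
    have "s0 \<noteq> t0" using s0 phi0 by auto
    with s0 have s0gt: "t0 < s0" by simp
    have "\<exists>x. t0 \<le> x \<and> x \<le> s0 \<and> \<phi> x = 0"
      by (rule IVT') (use phi0 s0 in auto, rule continuous_on_subset[OF contphi1], use s0 in auto)
    then obtain x where x: "t0 \<le> x" "x \<le> s0" "\<phi> x = 0" by blast
    hence "x \<in> Z" unfolding Z_def using s0 by auto
    hence "s0 \<le> x" by (rule s0min)
    hence phis0: "\<phi> s0 = 0" using x by simp
    obtain D where D: "(V has_real_derivative D) (at s0)" "D \<le> -2*l*V s0 + 2*l*C* sqrt (V s0)"
      using der[of s0] s0gt s0 t1 by auto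
    have Gs0: "G s0 \<ge> \<epsilon>" using Gpos s0 by simp
    have Vs0: "V s0 = (G s0)^2" using phis0 unfolding \<phi>_def by simp
    have sq: "sqrt (V s0) = G s0" using Vs0 Gs0 eps by simp
    have dG: "(G has_real_derivative (l*(C + \<epsilon> - G s0))) (at s0)"
      unfolding G_def
      by (auto intro!: derivative_eq_intros simp: algebra_simps)
    have dphi: "(\<phi> has_real_derivative (D - 2*G s0*(l*(C + \<epsilon> - G s0)))) (at s0)"
      unfolding \<phi>_def[abs_def]
      using D(1) dG by (auto intro!: derivative_eq_intros)
    have "D - 2*G s0*(l*(C + \<epsilon> - G s0)) \<le> -2*l*\<epsilon>*G s0"
      using D(2) Gs0 eps unfolding sq Vs0 by (simp add: algebra_simps power2_eq_square)
    also have "\<dots> < 0" using lam eps Gs0 by (simp add: mult_pos_pos)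
    finally have neg: "D - 2*G s0*(l*(C + \<epsilon> - G s0)) < 0" .
    obtain d where d: "d > 0" "\<And>h. h > 0 \<Longrightarrow> h < d \<Longrightarrow> \<phi> s0 < \<phi> (s0 - h)"
      using DERIV_neg_dec_left[OF dphi neg] by blast
    define h where "h = min (d/2) ((s0 - t0)/2)"
    have h: "h > 0" "h < d" using d s0gt unfolding h_def by auto
    have "s0 - h \<notin> Z" using s0min[of "s0 - h"] h by force
    moreover have "h \<le> (s0 - t0)/2" unfolding h_def by (rule min.cobounded2)
    hence "s0 - h \<in> {t0..t1}" using s0 s0gt h(1) by auto
    ultimately have "\<phi> (s0 - h) < 0" unfolding Z_def by auto
    with d(2)[OF h] phis0 show False by simp
  qed
  have fin: "V t \<le> (G t)^2" if "t \<in> {t0..t2}" for t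
  proof (cases "t = t0")
    case True
    have "W0^2 \<le> (G t0)^2" using W0 eps unfolding G_def by (intro power_mono) auto
    then show ?thesis using V0 True by simp
  next
    case False
    show ?thesis
    proof (cases "t = t2")
      case False
      with \<open>t \<noteq> t0\<close> that key[of t] show ?thesis unfolding \<phi>_def by auto
    next
      case True
      show ?thesis
      proof (rule ccontr)
        assume "\<not> V t \<le> (G t)^2"
        hence p: "\<phi> t2 > 0" using True unfolding \<phi>_def by simp
        obtain d where d: "d > 0" "\<And>x'. x' \<in> {t0..t2} \<Longrightarrow> dist x' t2 < d \<Longrightarrow> dist (\<phi> x') (\<phi> t2) < \<phi> t2"
          using contphi p T unfolding continuous_on_iff by (metis atLeastAtMost_iff less_eq_real_def)
        define md where "md = min d (t2-t0)"
        have m: "md \<le> t2 - t0" "md \<le> d" "md > 0"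
          using d(1) T unfolding md_def by auto
        define x' where "x' = t2 - md / 2"
        have x': "t0 < x'" "x' < t2" using m unfolding x'_def by linarith+
        have "dist x' t2 < d" using m unfolding x'_def dist_real_def by simp
        hence "dist (\<phi> x') (\<phi> t2) < \<phi> t2" using d(2) x' by auto
        hence "\<phi> x' > 0" unfolding dist_real_def by auto
        with key[OF x'] show False by simp
      qed
    qed
  qed
  have "sqrt (V t) \<le> sqrt ((G t)^2)" using fin[OF t] by (rule real_sqrt_le_mono)
  also have "\<dots> = G t" using Gpos[of t] t eps by simp
  finally show ?thesis unfolding G_def .
qed


lemma comp:
  fixes V :: "real \<Rightarrow> real"
  assumes T: "t0 < t2" and lam: "l > 0" and C: "C \<ge> 0" and W0: "W0 \<ge> 0"
    and cont: "continuous_on {t0..t2} V"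
    and nn: "\<And>t. t \<in> {t0..t2} \<Longrightarrow> V t \<ge> 0"
    and init: "sqrt (V t0) \<le> W0"
    and der: "\<And>t. t0 < t \<Longrightarrow> t < t2 \<Longrightarrow> \<exists>D. (V has_real_derivative D) (at t) \<and> D \<le> -2*l*V t + 2*l*C * sqrt (V t)"
    and t: "t \<in> {t0..t2}"
  shows "sqrt (V t) \<le> exp(-l*(t-t0))*W0 + (1-exp(-l*(t-t0)))*C"
  by (rule field_le_epsilon, rule comp_eps[OF T lam C W0 _ cont nn init der t]) auto

lemma convex_le_max:
  fixes e x y :: real
  assumes "0 \<le> e" "e \<le> 1"
  shows "e*x + (1-e)*y \<le> max x y"
proof -
  have "e*x \<le> e * max x y" using assms by (intro mult_left_mono) auto
  moreover have "(1-e)*y \<le> (1-e) * max x y" using assms by (intro mult_left_mono) auto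
  ultimately have "e*x + (1-e)*y \<le> e * max x y + (1-e) * max x y" by linarith
  also have "\<dots> = max x y" by (simp add: algebra_simps)
  finally show ?thesis .
qed

lemma step:
  fixes Ts a \<eta> \<eta>' :: real and b :: "nat \<Rightarrow> real" and V :: "real \<Rightarrow> real"
  assumes Ts: "Ts > 0" and a: "a \<ge> 0" and eta: "\<eta> > 0"
    and b_nonneg: "\<And>k. b k \<ge> 0"
    and V_nonneg: "\<And>t. t \<ge> 0 \<Longrightarrow> V t \<ge> 0"
    and V_cont: "continuous_on {0..} V"
    and V_deriv: "\<And>k t. real k * Ts < t \<Longrightarrow> t < real (Suc k) * Ts \<Longrightarrow>
        \<exists>D. (V has_real_derivative D) (at t) \<and>
            D \<le> - 2 * \<eta> * V t + sqrt (V t) *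
                 (a * (SUP t'\<in>{real k * Ts..t}. sqrt (V t')) + b k)"
    and eta': "0 < \<eta>'" "\<eta>' < \<eta>"
    and q_lt: "q_const Ts a \<eta> \<eta>' < 1"
  shows "sqrt (V (real (Suc k) * Ts))
              \<le> q_const Ts a \<eta> \<eta>' * sqrt (V (real k * Ts)) + r_const Ts \<eta> \<eta>' * b k"
proof -
  define q where "q = q_const Ts a \<eta> \<eta>'"
  define r where "r = r_const Ts \<eta> \<eta>'"
  define e' where "e' = exp (- \<eta>' * Ts)"
  define t0 where "t0 = real k * Ts"
  define t2 where "t2 = real (Suc k) * Ts"
  define W where "W t = sqrt (V t)" for t
  define S where "S = (SUP t\<in>{t0..t2}. W t)"
  have e': "0 < e'" "e' < 1" unfolding e'_def using eta' Ts by (auto simp: mult_pos_pos)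
  have qA: "q \<ge> e' + a * (1 - e') / (2 * \<eta>')" and qB: "q \<ge> a / (2 * (\<eta> - \<eta>'))"
    unfolding q_def q_const_def e'_def by auto
  have rA: "r \<ge> (1 - e') / (2 * \<eta>')" and rB: "r \<ge> 1 / (2 * (\<eta> - \<eta>'))"
    unfolding r_def r_const_def e'_def by auto
  have q1: "q < 1" using q_lt unfolding q_def .
  have a2: "a < 2 * \<eta>'"
  proof -
    have "a * (1 - e') / (2 * \<eta>') < 1 - e'" using qA q1 by linarith
    hence "a * (1 - e') < (2 * \<eta>') * (1 - e')" using eta' by (simp add: field_simps)
    thus ?thesis using e' by (simp add: mult_less_cancel_right)
  qed
  have q0: "q \<ge> 0" using qB a eta' by (smt (verit) divide_nonneg_pos)
  have T: "t0 < t2" unfolding t0_def t2_def using Ts by (simp add: algebra_simps)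
  have t0nn: "t0 \<ge> 0" unfolding t0_def using Ts by simp
  have t2t0: "t2 - t0 = Ts" unfolding t0_def t2_def by (simp add: algebra_simps)
  have contV: "continuous_on {t0..t2} V" by (rule continuous_on_subset[OF V_cont]) (use t0nn in auto)
  have nn: "V t \<ge> 0" if "t \<in> {t0..t2}" for t using that t0nn V_nonneg by auto
  have contW: "continuous_on {t0..t2} W" unfolding W_def by (intro continuous_intros contV)
  have "compact (W ` {t0..t2})" by (rule compact_continuous_image[OF contW]) simp
  hence bdd: "bdd_above (W ` {t0..t2})" by (intro bounded_imp_bdd_above compact_imp_bounded)
  have WS: "W t \<le> S" if "t \<in> {t0..t2}" for t unfolding S_def by (rule cSUP_upper[OF that bdd])
  have W0: "W t0 \<ge> 0" unfolding W_def using nn[of t0] T by simp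
  have S0: "S \<ge> 0" using WS[of t0] W0 T by auto
  have bk: "b k \<ge> 0" by (rule b_nonneg)
  have bound: "W t \<le> exp(-l*(t-t0))*W t0 + (1-exp(-l*(t-t0)))*((a*S + b k)/(2*l))"
    if l: "0 < l" "l \<le> \<eta>" and t: "t \<in> {t0..t2}" for l t
    unfolding W_def
  proof (rule comp[OF T l(1) _ _ contV nn _ _ t])
    show "0 \<le> (a*S + b k)/(2*l)" using a S0 bk l by simp
    show "0 \<le> sqrt (V t0)" using nn[of t0] T by simp
    show "sqrt (V t0) \<le> sqrt (V t0)" by simp
    fix s assume s: "t0 < s" "s < t2"
    obtain D where D: "(V has_real_derivative D) (at s)"
      "D \<le> - 2 * \<eta> * V s + sqrt (V s) * (a * (SUP t'\<in>{real k * Ts..s}. sqrt (V t')) + b k)"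
      using V_deriv[of k s] s unfolding t0_def t2_def by blast
    have "(SUP t'\<in>{t0..s}. W t') \<le> S" unfolding S_def
      by (rule cSUP_subset_mono) (use s bdd in auto)
    hence "a * (SUP t'\<in>{t0..s}. W t') + b k \<le> a * S + b k" using a by (simp add: mult_left_mono)
    hence "sqrt (V s) * (a * (SUP t'\<in>{t0..s}. W t') + b k) \<le> sqrt (V s) * (a * S + b k)"
      using nn[of s] s by (intro mult_left_mono) auto
    moreover have "- 2 * \<eta> * V s \<le> -2 * l * V s" using nn[of s] s l by (simp add: mult_right_mono)
    ultimately have "D \<le> -2 * l * V s + sqrt (V s) * (a * S + b k)"
      using D(2) unfolding W_def t0_def by linarith
    also have "\<dots> = -2*l*V s + 2*l*((a*S + b k)/(2*l)) * sqrt (V s)" using l by simp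
    finally show "\<exists>D. (V has_real_derivative D) (at s) \<and> D \<le> -2*l*V s + 2*l*((a*S + b k)/(2*l)) * sqrt (V s)"
      using D(1) by blast
  qed
  have Sle: "S \<le> M" if "\<And>t. t \<in> {t0..t2} \<Longrightarrow> W t \<le> M" for M
    unfolding S_def using that T by (intro cSUP_least) auto
  have Smax: "S \<le> max (W t0) ((a*S + b k)/(2*\<eta>))"
  proof (rule Sle)
    fix t assume t: "t \<in> {t0..t2}"
    have "W t \<le> exp(-\<eta>*(t-t0))*W t0 + (1-exp(-\<eta>*(t-t0)))*((a*S + b k)/(2*\<eta>))"
      using bound[OF eta order.refl t] .
    also have "\<dots> \<le> max (W t0) ((a*S + b k)/(2*\<eta>))"
      by (rule convex_le_max) (use t eta in auto)
    finally show "W t \<le> max (W t0) ((a*S + b k)/(2*\<eta>))" .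
  qed
  have Wt2: "W t2 \<le> S" using WS T by auto
  have "W t2 \<le> q * W t0 + r * b k"
  proof (cases "S \<le> W t0")
    case True
    have "W t2 \<le> exp(-\<eta>'*(t2-t0))*W t0 + (1-exp(-\<eta>'*(t2-t0)))*((a*S + b k)/(2*\<eta>'))"
      using bound[of \<eta>' t2] eta' T by auto
    also have "\<dots> = e' * W t0 + (1 - e') * ((a*S + b k)/(2*\<eta>'))" unfolding t2t0 e'_def ..
    also have "\<dots> \<le> e' * W t0 + (1 - e') * ((a*W t0 + b k)/(2*\<eta>'))"
      using True a eta' e' by (intro add_left_mono mult_left_mono divide_right_mono) (auto intro: mult_left_mono)
    also have "\<dots> = (e' + a * (1 - e') / (2 * \<eta>')) * W t0 + ((1 - e') / (2 * \<eta>')) * b k"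
      using eta' by (simp add: field_simps)
    also have "\<dots> \<le> q * W t0 + r * b k"
      using qA rA W0 bk by (intro add_mono mult_right_mono) auto
    finally show ?thesis .
  next
    case False
    hence S1: "S \<le> (a*S + b k)/(2*\<eta>)" using Smax by linarith
    hence "2*\<eta>*S \<le> a*S + b k" using eta by (simp add: field_simps)
    hence "(2*\<eta> - a)*S \<le> b k" by (simp add: algebra_simps)
    moreover have "2*(\<eta> - \<eta>') \<le> 2*\<eta> - a" using a2 by simp
    moreover have "0 < 2*(\<eta> - \<eta>')" using eta' by simp
    ultimately have "2*(\<eta> - \<eta>')*S \<le> b k" using S0
      by (smt (verit) mult_right_mono)
    hence "S \<le> b k * (1 / (2 * (\<eta> - \<eta>')))" using eta' by (simp add: field_simps)
    also have "\<dots> \<le> b k * r" using rB bk by (rule mult_left_mono)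
    also have "\<dots> \<le> q * W t0 + r * b k" using q0 W0 by (simp add: mult.commute)
    finally show ?thesis using Wt2 by linarith
  qed
  thus ?thesis unfolding W_def t0_def t2_def q_def r_def .
qed

theorem lemma1:
  fixes Ts a \<eta> \<eta>' :: real and b :: "nat \<Rightarrow> real" and V :: "real \<Rightarrow> real"
  assumes Ts: "Ts > 0" and a: "a \<ge> 0" and eta: "\<eta> > 0"
    and b_nonneg: "\<And>k. b k \<ge> 0"
    and V_nonneg: "\<And>t. t \<ge> 0 \<Longrightarrow> V t \<ge> 0"
    and V_cont: "continuous_on {0..} V"
    and V_deriv: "\<And>k t. real k * Ts < t \<Longrightarrow> t < real (Suc k) * Ts \<Longrightarrow>
        \<exists>D. (V has_real_derivative D) (at t) \<and>
            D \<le> - 2 * \<eta> * V t + sqrt (V t) *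
                 (a * (SUP t'\<in>{real k * Ts..t}. sqrt (V t')) + b k)"
    and eta': "0 < \<eta>'" "\<eta>' < \<eta>"
    and q_lt: "q_const Ts a \<eta> \<eta>' < 1"
  shows "(\<forall>k. sqrt (V (real (Suc k) * Ts))
              \<le> q_const Ts a \<eta> \<eta>' * sqrt (V (real k * Ts)) + r_const Ts \<eta> \<eta>' * b k)
       \<and> (\<forall>k. sqrt (V (real k * Ts))
              \<le> q_const Ts a \<eta> \<eta>' ^ k * sqrt (V 0)
                 + r_const Ts \<eta> \<eta>' * (\<Sum>i<k. b i * q_const Ts a \<eta> \<eta>' ^ (k - i - 1)))
       \<and> (\<forall>\<rho>. q_const Ts a \<eta> \<eta>' < \<rho> \<and> \<rho> < 1 \<and>
              (\<forall>k. b k = (\<rho> - q_const Ts a \<eta> \<eta>') / r_const Ts \<eta> \<eta>' * sqrt (V (real k * Ts)))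
              \<longrightarrow> (\<forall>k. sqrt (V (real k * Ts)) \<le> \<rho> ^ k * sqrt (V 0)))"
  proof -
  define q where "q = q_const Ts a \<eta> \<eta>'"
  define r where "r = r_const Ts \<eta> \<eta>'"
  define W where "W k = sqrt (V (real k * Ts))" for k
  have s1: "W (Suc k) \<le> q * W k + r * b k" for k
    unfolding W_def q_def r_def
    by (rule step[OF Ts a eta b_nonneg V_nonneg V_cont V_deriv eta' q_lt])
  have q0: "q \<ge> 0" unfolding q_def q_const_def using a eta'
    by (simp add: le_max_iff_disj)
  have r0: "r > 0" unfolding r_def r_const_def using eta' by (simp add: less_max_iff_disj)
  have W00: "W 0 = sqrt (V 0)" unfolding W_def by simp
  have s2: "W k \<le> q ^ k * W 0 + r * (\<Sum>i<k. b i * q ^ (k - i - 1))" for k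
  proof (induction k)
    case 0
    then show ?case by simp
  next
    case (Suc k)
    have sumeq: "(\<Sum>i<Suc k. b i * q ^ (Suc k - i - 1)) = q * (\<Sum>i<k. b i * q ^ (k - i - 1)) + b k"
    proof -
      have "(\<Sum>i<k. b i * q ^ (Suc k - i - 1)) = (\<Sum>i<k. q * (b i * q ^ (k - i - 1)))"
      proof (rule sum.cong)
        fix i assume "i \<in> {..<k}"
        hence "Suc k - i - 1 = Suc (k - i - 1)" by auto
        thus "b i * q ^ (Suc k - i - 1) = q * (b i * q ^ (k - i - 1))" by simp
      qed simp
      thus ?thesis by (simp add: sum_distrib_left)
    qed
    have "W (Suc k) \<le> q * W k + r * b k" by (rule s1)
    also have "\<dots> \<le> q * (q ^ k * W 0 + r * (\<Sum>i<k. b i * q ^ (k - i - 1))) + r * b k"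
      using Suc.IH q0 by (intro add_right_mono mult_left_mono) auto
    also have "\<dots> = q ^ Suc k * W 0 + r * (\<Sum>i<Suc k. b i * q ^ (Suc k - i - 1))"
      unfolding sumeq by (simp add: algebra_simps)
    finally show ?case .
  qed
  have s3: "W k \<le> \<rho> ^ k * W 0"
    if rho: "q < \<rho>" "\<rho> < 1" and bk: "\<forall>k. b k = (\<rho> - q) / r * W k" for \<rho> k
  proof (induction k)
    case 0
    then show ?case by simp
  next
    case (Suc k)
    have "W (Suc k) \<le> q * W k + r * b k" by (rule s1)
    also have "\<dots> = \<rho> * W k" using bk r0 by (simp add: field_simps)
    also have "\<dots> \<le> \<rho> * (\<rho> ^ k * W 0)" using Suc.IH rho q0 by (intro mult_left_mono) auto
    finally show ?case by simp
  qed
  show ?thesis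
    unfolding q_def[symmetric] r_def[symmetric] W_def[symmetric] W00[symmetric]
    using s1 s2 s3 by blast
qed

end
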